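(* In the Biggs-Smith graph $\mathrm{BS}$, every path of length at most $7$ contained in the $a$-cycle is a geodesic (a shortest path between its endpoints).
   Context: The Biggs-Smith graph $\mathrm{BS}$ is the cubic graph on the $102$ vertices $ia,ib,ic,id,ie,if$ for $i\in\{1,\dots,17\}$ (indices taken modulo 17, with $0$ written as $17$), whose edges are: $ie\,ia$, $ie\,ib$, $ie\,if$, $if\,ic$, $if\,id$ for each $i$; and $ia\,(i+1)a$, $ib\,(i+4)b$, $ic\,(i+2)c$, $id\,(i+8)d$ for each $i$. The $a$-cycle is the $17$-cycle $1a,2a,\dots,17a,1a$ formed by the edges $ia\,(i+1)a$. *)

theory Defs
  imports Main
begin

text \<open>The Biggs-Smith graph. A vertex is a pair (i, x) with i an index modulo 17
  (represented by 0..16, where the paper's label 17 corresponds to 0) and x a letter.\<close>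

datatype letter = La | Lb | Lc | Ld | Le | Lf

type_synonym bs_vertex = "nat \<times> letter"

definition bs_vertices :: "bs_vertex set" where
  "bs_vertices = {0..<17} \<times> UNIV"

definition bs_edge0 :: "bs_vertex \<Rightarrow> bs_vertex \<Rightarrow> bool" where
  "bs_edge0 u v \<longleftrightarrow> (\<exists>i<17.
      (u = (i, Le) \<and> v = (i, La)) \<or>
      (u = (i, Le) \<and> v = (i, Lb)) \<or>
      (u = (i, Le) \<and> v = (i, Lf)) \<or>
      (u = (i, Lf) \<and> v = (i, Lc)) \<or>
      (u = (i, Lf) \<and> v = (i, Ld)) \<or>
      (u = (i, La) \<and> v = ((i + 1) mod 17, La)) \<or>
      (u = (i, Lb) \<and> v = ((i + 4) mod 17, Lb)) \<or>
      (u = (i, Lc) \<and> v = ((i + 2) mod 17, Lc)) \<or>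
      (u = (i, Ld) \<and> v = ((i + 8) mod 17, Ld)))"

definition bs_adj :: "bs_vertex \<Rightarrow> bs_vertex \<Rightarrow> bool" where
  "bs_adj u v \<longleftrightarrow> bs_edge0 u v \<or> bs_edge0 v u"

definition acycle_adj :: "bs_vertex \<Rightarrow> bs_vertex \<Rightarrow> bool" where
  "acycle_adj u v \<longleftrightarrow> (\<exists>i<17.
      (u = (i, La) \<and> v = ((i + 1) mod 17, La)) \<or>
      (v = (i, La) \<and> u = ((i + 1) mod 17, La)))"

text \<open>Walks in a graph given by an adjacency relation, as nonempty vertex lists;
  the length of a walk is its number of edges, i.e. length of the list minus 1.\<close>
definition is_walk :: "('v \<Rightarrow> 'v \<Rightarrow> bool) \<Rightarrow> 'v list \<Rightarrow> bool" where
  "is_walk E p \<longleftrightarrow> p \<noteq> [] \<and> (\<forall>j. Suc j < length p \<longrightarrow> E (p ! j) (p ! Suc j))"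

definition is_path :: "('v \<Rightarrow> 'v \<Rightarrow> bool) \<Rightarrow> 'v list \<Rightarrow> bool" where
  "is_path E p \<longleftrightarrow> is_walk E p \<and> distinct p"

definition bs_geodesic :: "bs_vertex list \<Rightarrow> bool" where
  "bs_geodesic p \<longleftrightarrow> is_path bs_adj p \<and>
     (\<forall>q. is_walk bs_adj q \<and> hd q = hd p \<and> last q = last p \<longrightarrow> length p \<le> length q)"

end

theory Submission
  imports Defs
begin

definition Dl :: "letter \<Rightarrow> nat list" where
  "Dl x = (case x of
     La \<Rightarrow> [0, 1, 2, 3, 4, 5, 6, 7, 6, 6, 7, 6, 5, 4, 3, 2, 1]
   | Lb \<Rightarrow> [2, 3, 4, 4, 3, 4, 5, 5, 4, 4, 5, 5, 4, 3, 4, 4, 3]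
   | Lc \<Rightarrow> [3, 4, 4, 5, 5, 6, 6, 7, 6, 6, 7, 6, 6, 5, 5, 4, 4]
   | Ld \<Rightarrow> [3, 4, 5, 6, 6, 7, 6, 5, 4, 4, 5, 6, 7, 6, 6, 5, 4]
   | Le \<Rightarrow> [1, 2, 3, 4, 4, 5, 6, 6, 5, 5, 6, 6, 5, 4, 4, 3, 2]
   | Lf \<Rightarrow> [2, 3, 4, 5, 5, 6, 7, 6, 5, 5, 6, 7, 6, 5, 5, 4, 3])"

definition D :: "bs_vertex \<Rightarrow> nat" where
  "D v = Dl (snd v) ! fst v"

lemma lt17: "i < (17::nat) \<Longrightarrow> i = 0 \<or> i = 1 \<or> i = 2 \<or> i = 3 \<or> i = 4 \<or> i = 5 \<or> i = 6 \<or> i = 7 \<or>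
  i = 8 \<or> i = 9 \<or> i = 10 \<or> i = 11 \<or> i = 12 \<or> i = 13 \<or> i = 14 \<or> i = 15 \<or> i = 16"
  by presburger

lemma edge_lip: "bs_edge0 u v \<Longrightarrow> D v \<le> D u + 1 \<and> D u \<le> D v + 1"
  unfolding bs_edge0_def
  apply (elim exE conjE)
  subgoal for i
    using lt17[of i] by (elim disjE; auto simp: D_def Dl_def)
  done

lemma adj_lip: "bs_adj u v \<Longrightarrow> D v \<le> D u + 1 \<and> D u \<le> D v + 1"
  unfolding bs_adj_def using edge_lip by blast

definition rot :: "nat \<Rightarrow> bs_vertex \<Rightarrow> bs_vertex" where
  "rot k v = ((fst v + k) mod 17, snd v)"

lemma mod_shift: "((i + 1) mod 17 + k) mod 17 = ((i + k) mod (17::nat) + 1) mod 17"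
  "((i + 4) mod 17 + k) mod 17 = ((i + k) mod (17::nat) + 4) mod 17"
  "((i + 2) mod 17 + k) mod 17 = ((i + k) mod (17::nat) + 2) mod 17"
  "((i + 8) mod 17 + k) mod 17 = ((i + k) mod (17::nat) + 8) mod 17"
  by (simp_all add: mod_simps ac_simps)

lemma edge_rot: "bs_edge0 u v \<Longrightarrow> bs_edge0 (rot k u) (rot k v)"
  unfolding bs_edge0_def
  apply (elim exE conjE)
  subgoal for i
    apply (rule exI[of _ "(i + k) mod 17"])
    apply (elim disjE conjE; simp only: rot_def fst_conv snd_conv mod_shift; simp)
    done
  done

lemma adj_rot: "bs_adj u v \<Longrightarrow> bs_adj (rot k u) (rot k v)"
  unfolding bs_adj_def using edge_rot by blast

lemma is_walk_Cons2: "is_walk E (x # y # ys) \<longleftrightarrow> E x y \<and> is_walk E (y # ys)"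
  unfolding is_walk_def
  apply auto
  subgoal for j by (cases j) auto
  done

lemma is_walk_single: "is_walk E [x]"
  unfolding is_walk_def by auto

lemma walk_rot: "is_walk bs_adj q \<Longrightarrow> is_walk bs_adj (map (rot k) q)"
proof (induction q rule: induct_list012)
  case 1 then show ?case by (simp add: is_walk_def)
next
  case (2 x) then show ?case by (simp add: is_walk_single)
next
  case (3 x y zs)
  then show ?case by (simp add: is_walk_Cons2 adj_rot)
qed

lemma walk_D: "is_walk bs_adj q \<Longrightarrow>
   D (last q) \<le> D (hd q) + (length q - 1) \<and> D (hd q) \<le> D (last q) + (length q - 1)"
proof (induction q rule: induct_list012)
  case 1 then show ?case by (simp add: is_walk_def)
next
  case (2 x) then show ?case by simp
next
  case (3 x y zs)
  then have a: "bs_adj x y" and w: "is_walk bs_adj (y # zs)" by (auto simp: is_walk_Cons2)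
  from "3.IH"(2)[OF w] adj_lip[OF a] show ?case by auto
qed

fun fwd :: "bs_vertex list \<Rightarrow> bool" where
  "fwd (x # y # ys) = (y = ((fst x + 1) mod 17, La) \<and> fwd (y # ys))"
| "fwd _ = True"

fun bwd :: "bs_vertex list \<Rightarrow> bool" where
  "bwd (x # y # ys) = (snd y = La \<and> x = ((fst y + 1) mod 17, La) \<and> bwd (y # ys))"
| "bwd _ = True"

lemma acyc: "acycle_adj u v \<Longrightarrow> fst u < 17 \<and> snd u = La \<and> fst v < 17 \<and> snd v = La \<and>
   (v = ((fst u + 1) mod 17, La) \<or> u = ((fst v + 1) mod 17, La))"
  unfolding acycle_adj_def by auto

lemma is_path_Cons2: "is_path E (x # y # ys) \<Longrightarrow> E x y \<and> x \<notin> set (y # ys) \<and> is_path E (y # ys)"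
  unfolding is_path_def using is_walk_Cons2 by fastforce

lemma mod17_inj: "a < 17 \<Longrightarrow> c < 17 \<Longrightarrow> (a + 1) mod 17 = (c + 1) mod (17::nat) \<Longrightarrow> a = c"
proof -
  assume "a < 17" "c < 17" "(a + 1) mod 17 = (c + 1) mod (17::nat)"
  have e: "x < 17 \<Longrightarrow> (x + 1) mod 17 = (if x = 16 then 0 else x + 1)" for x :: nat
    by (cases "x = 16") auto
  show "a = c" using e[of a] e[of c] \<open>a < 17\<close> \<open>c < 17\<close> \<open>(a + 1) mod 17 = _\<close>
    by (auto split: if_splits)
qed

lemma path_dir: "is_path acycle_adj p \<Longrightarrow> fwd p \<or> bwd p"
proof (induction p rule: fwd.induct)
  case (1 x y ys)
  have P: "acycle_adj x y \<and> x \<notin> set (y # ys) \<and> is_path acycle_adj (y # ys)"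
    using is_path_Cons2[OF "1.prems"] .
  then have a: "acycle_adj x y" and nx: "x \<notin> set (y # ys)" and pp: "is_path acycle_adj (y # ys)"
    by (rule conjunct1, rule conjunct1[OF conjunct2], rule conjunct2[OF conjunct2])
  note A = acyc[OF a]
  have x17: "fst x < 17" and xa: "snd x = La" and y17: "fst y < 17" and ya: "snd y = La"
    and dis: "y = ((fst x + 1) mod 17, La) \<or> x = ((fst y + 1) mod 17, La)" using A by blast+
  show ?case
  proof (cases ys)
    case Nil
    from dis show ?thesis
    proof
      assume "y = ((fst x + 1) mod 17, La)"
      then have "fwd (x # y # ys)" using Nil by simp
      then show ?thesis ..
    next
      assume "x = ((fst y + 1) mod 17, La)"
      then have "bwd (x # y # ys)" using Nil ya by simp
      then show ?thesis ..
    qed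
  next
    case (Cons z zs)
    have zx: "z \<noteq> x" using nx Cons by auto
    from "1.IH"[OF pp] show ?thesis
    proof
      assume f: "fwd (y # ys)"
      then have zy: "z = ((fst y + 1) mod 17, La)" using Cons by simp
      have "\<not> x = ((fst y + 1) mod 17, La)" using zx zy by metis
      then have yx: "y = ((fst x + 1) mod 17, La)" using dis by blast
      have "fwd (x # y # ys)" apply (subst fwd.simps(1)) using yx f by blast
      then show ?thesis ..
    next
      assume b: "bwd (y # ys)"
      then have yz: "y = ((fst z + 1) mod 17, La)" and za: "snd z = La" using Cons by simp_all
      have z17: "fst z < 17" using pp Cons acyc[of y z] by (auto simp: is_path_def is_walk_Cons2)
      show ?thesis
      proof (cases "y = ((fst x + 1) mod 17, La)")
        case True
        then have "(fst x + 1) mod 17 = (fst z + 1) mod 17" using yz by (metis fst_conv)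
        then have "fst x = fst z" using mod17_inj x17 z17 by blast
        then have "x = z" using xa za by (metis prod.collapse)
        then show ?thesis using zx by simp
      next
        case False
        then have xy: "x = ((fst y + 1) mod 17, La)" using dis by blast
        have "bwd (x # y # ys)" apply (subst bwd.simps(1)) using xy ya b by blast
        then show ?thesis ..
      qed
    qed
  qed
qed auto

lemma fwd_last: "fwd (x # xs) \<Longrightarrow> xs \<noteq> [] \<Longrightarrow> last (x # xs) = ((fst x + length xs) mod 17, La)"
proof (induction xs arbitrary: x)
  case Nil then show ?case by simp
next
  case (Cons y ys)
  have yf: "y = ((fst x + 1) mod 17, La) \<and> fwd (y # ys)" using Cons.prems(1) unfolding fwd.simps(1) .
  from yf have y: "y = ((fst x + 1) mod 17, La)" by (rule conjunct1)
  from yf have f: "fwd (y # ys)" by (rule conjunct2)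
  show ?case
  proof (cases "ys = []")
    case True then show ?thesis using y by simp
  next
    case False
    have "last (x # y # ys) = last (y # ys)" by simp
    also have "\<dots> = ((fst y + length ys) mod 17, La)" using Cons.IH[OF f False] .
    also have "fst y + length ys = (fst x + 1) mod 17 + length ys" using y by simp
    also have "((fst x + 1) mod 17 + length ys) mod 17 = (fst x + length (y # ys)) mod 17"
      by (simp add: mod_simps)
    finally show ?thesis .
  qed
qed

lemma bwd_hd: "bwd (x # xs) \<Longrightarrow> xs \<noteq> [] \<Longrightarrow>
   x = ((fst (last xs) + length xs) mod 17, La) \<and> snd (last xs) = La"
proof (induction xs arbitrary: x)
  case Nil then show ?case by simp
next
  case (Cons y ys)
  have xyb: "snd y = La \<and> x = ((fst y + 1) mod 17, La) \<and> bwd (y # ys)" using Cons.prems(1) unfolding bwd.simps(1) .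
  then have x: "x = ((fst y + 1) mod 17, La)" and ya: "snd y = La" and b: "bwd (y # ys)" by blast+
  show ?case
  proof (cases "ys = []")
    case True then show ?thesis using x ya by simp
  next
    case False
    from Cons.IH[OF b False] have y: "y = ((fst (last ys) + length ys) mod 17, La)"
      and l: "snd (last ys) = La" by simp_all
    have "x = (((fst (last ys) + length ys) mod 17 + 1) mod 17, La)" using x y by simp
    also have "((fst (last ys) + length ys) mod 17 + 1) mod 17 = (fst (last ys) + length (y # ys)) mod 17"
      by (simp add: mod_simps)
    finally show ?thesis using False l by simp
  qed
qed

lemma walk_acyc: "is_walk acycle_adj p \<Longrightarrow> 2 \<le> length p \<Longrightarrow> v \<in> set p \<Longrightarrow> fst v < 17 \<and> snd v = La"
proof (induction p rule: induct_list012)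
  case 1 then show ?case by simp
next
  case (2 x) then show ?case by simp
next
  case (3 x y zs)
  have a: "acycle_adj x y" using "3.prems"(1) by (simp add: is_walk_Cons2)
  have w: "is_walk acycle_adj (y # zs)" using "3.prems"(1) by (simp add: is_walk_Cons2)
  note A = acyc[OF a]
  show ?case
  proof (cases "v = x \<or> v = y")
    case True then show ?thesis using A by blast
  next
    case False
    then have "zs \<noteq> []" using "3.prems"(3) by auto
    then show ?thesis using "3.IH"(2)[OF w] False "3.prems"(3) by (cases zs) auto
  qed
qed

lemma D_a: "n \<le> 7 \<Longrightarrow> D (n, La) = n"
  apply (subgoal_tac "n < 17")
   apply (drule lt17)
   apply (elim disjE; simp add: D_def Dl_def)
  apply simp
  done

lemma rot_end: "i < 17 \<Longrightarrow> ((i + n) mod 17 + (17 - i)) mod 17 = n mod (17::nat)"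
proof -
  assume "i < 17"
  then have "i + n + (17 - i) = n + 17" by simp
  then show ?thesis by (metis mod_add_left_eq mod_add_self2)
qed

lemma rot_zero: "i < 17 \<Longrightarrow> (i + (17 - i)) mod 17 = (0::nat)"
  by simp

lemma acyc_bs: "acycle_adj u v \<Longrightarrow> bs_adj u v"
  unfolding acycle_adj_def bs_adj_def
proof (elim exE conjE disjE)
  fix i :: nat assume i: "i < 17" "u = (i, La)" "v = ((i + 1) mod 17, La)"
  have "bs_edge0 u v" unfolding bs_edge0_def
    apply (rule exI[of _ i]) using i by simp
  then show "bs_edge0 u v \<or> bs_edge0 v u" ..
next
  fix i :: nat assume i: "i < 17" "v = (i, La)" "u = ((i + 1) mod 17, La)"
  have "bs_edge0 v u" unfolding bs_edge0_def
    apply (rule exI[of _ i]) using i by simp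
  then show "bs_edge0 u v \<or> bs_edge0 v u" ..
qed

theorem lemma2p5:
  fixes p :: "bs_vertex list"
  assumes "is_path acycle_adj p"
    and "length p - 1 \<le> 7"
  shows "bs_geodesic p"
  unfolding bs_geodesic_def
proof (intro conjI allI impI)
  have P: "is_path acycle_adj p" by fact
  then show "is_path bs_adj p" unfolding is_path_def is_walk_def using acyc_bs by blast
  fix q assume Q: "is_walk bs_adj q \<and> hd q = hd p \<and> last q = last p"
  then have wq: "is_walk bs_adj q" and hq: "hd q = hd p" and lq: "last q = last p" by simp_all
  have qne: "q \<noteq> []" using wq by (simp add: is_walk_def)
  have pne: "p \<noteq> []" using P by (simp add: is_path_def is_walk_def)
  show "length p \<le> length q"
  proof (cases "length p = 1")
    case True then show ?thesis using qne by (cases q) auto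
  next
    case False
    then obtain x xs where px: "p = x # xs" and xsne: "xs \<noteq> []" using pne
      by (cases p) auto
    define n where "n = length xs"
    have n7: "n \<le> 7" using assms(2) px n_def by simp
    have lp: "length p = n + 1" using px n_def by simp
    have wp: "is_walk acycle_adj p" using P by (simp add: is_path_def)
    have l2: "2 \<le> length p" using px xsne by (cases xs) auto
    have hx: "fst x < 17" "snd x = La" using walk_acyc[OF wp l2, of x] px by auto
    have hl: "fst (last p) < 17" "snd (last p) = La" using walk_acyc[OF wp l2, of "last p"] pne by auto
    have lqm: "length (map (rot k) q) - 1 = length q - 1" for k by simp
    from path_dir[OF P] show ?thesis
    proof
      assume f: "fwd p"
      have L: "last p = ((fst x + n) mod 17, La)" using fwd_last[of x xs] f px xsne n_def by simp
      define q' where "q' = map (rot (17 - fst x)) q"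
      have w': "is_walk bs_adj q'" using walk_rot[OF wq] q'_def by simp
      have "hd q' = rot (17 - fst x) x" using q'_def qne hq px by (simp add: hd_map)
      also have "\<dots> = (0, La)" using hx by (simp add: rot_def)
      finally have h': "hd q' = (0, La)" .
      have "last q' = rot (17 - fst x) (last p)" using q'_def qne lq by (simp add: last_map)
      also have "\<dots> = (n, La)" using L rot_end[OF hx(1), of n] n7 by (simp add: rot_def)
      finally have l': "last q' = (n, La)" .
      have "D (last q') \<le> D (hd q') + (length q' - 1)" using walk_D[OF w'] by simp
      then have "n \<le> length q - 1" using h' l' D_a[OF n7] D_a[of 0] q'_def by simp
      then show ?thesis using lp qne by (cases q) auto
    next
      assume b: "bwd p"
      have X: "x = ((fst (last p) + n) mod 17, La)" using bwd_hd[of x xs] b px xsne n_def by simp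
      define m where "m = fst (last p)"
      have m17: "m < 17" using hl m_def by simp
      define q' where "q' = map (rot (17 - m)) q"
      have w': "is_walk bs_adj q'" using walk_rot[OF wq] q'_def by simp
      have "last q' = rot (17 - m) (last p)" using q'_def qne lq by (simp add: last_map)
      also have "\<dots> = (0, La)" using m17 hl m_def by (simp add: rot_def)
      finally have l': "last q' = (0, La)" .
      have "hd q' = rot (17 - m) x" using q'_def qne hq px by (simp add: hd_map)
      also have "\<dots> = (n, La)" using X rot_end[OF m17, of n] n7 m_def by (simp add: rot_def)
      finally have h': "hd q' = (n, La)" .
      have "D (hd q') \<le> D (last q') + (length q' - 1)" using walk_D[OF w'] by simp
      then have "n \<le> length q - 1" using h' l' D_a[OF n7] D_a[of 0] q'_def by simp
      then show ?thesis using lp qne by (cases q) auto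
    qed
  qed
qed

end
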